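(* For every prime power $q$, the function $n\mapsto\varrho(n,q)$ (for integers $n\ge1$) is increasing, where $$\varrho(n,q):=\frac{f(n,q)}{\binom{n+1}{2}_q}.$$
   Context: $f(n,q)$ is the smallest size of a set of lines of $\mathrm{PG}(n,q)$ (the $n$-dimensional projective space over $\mathbb F_q$) such that every plane contains one of them ($f(1,q)=0$). $\binom{n+1}{2}_q=\frac{(q^{n+1}-1)(q^n-1)}{(q^2-1)(q-1)}$ is the number of lines of $\mathrm{PG}(n,q)$. *)

theory Defs
  imports Complex_Main "HOL-Library.Function_Algebras"
begin

text \<open>Vectors of F^(n+1), coordinates indexed by 0..n, as functions nat => F vanishing beyond n.\<close>
definition pvec :: "nat \<Rightarrow> (nat \<Rightarrow> 'a::field) set" where
  "pvec n = {v. \<forall>i>n. v i = 0}"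

definition fscale :: "'a::field \<Rightarrow> (nat \<Rightarrow> 'a) \<Rightarrow> (nat \<Rightarrow> 'a)" where
  "fscale c v = (\<lambda>i. c * v i)"

text \<open>k-dimensional subspaces of F^(n+1), i.e. projective (k-1)-subspaces of PG(n,F).\<close>
definition psubs :: "nat \<Rightarrow> nat \<Rightarrow> (nat \<Rightarrow> 'a::field) set set" where
  "psubs n k = {S. S \<subseteq> pvec n \<and> module.subspace fscale S \<and> vector_space.dim fscale S = k}"

text \<open>Lines of PG(n,F) = 2-dim subspaces, planes = 3-dim subspaces.\<close>
definition fcov :: "'a::field itself \<Rightarrow> nat \<Rightarrow> nat" where
  "fcov _ n = (LEAST m. \<exists>L \<subseteq> (psubs n 2 :: (nat \<Rightarrow> 'a) set set).
       card L = m \<and> (\<forall>P \<in> (psubs n 3 :: (nat \<Rightarrow> 'a) set set). \<exists>l\<in>L. l \<subseteq> P))"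

definition gauss2 :: "nat \<Rightarrow> nat \<Rightarrow> real" where
  "gauss2 n q = ((real q ^ (n+1) - 1) * (real q ^ n - 1)) / ((real q ^ 2 - 1) * (real q - 1))"

definition rho :: "'a::{field,finite} itself \<Rightarrow> nat \<Rightarrow> real" where
  "rho T n = real (fcov T n) / gauss2 n (card (UNIV :: 'a set))"

end

theory Submission
  imports Defs "HOL-Library.FuncSet"
begin


lemma vs_fscale: "vector_space (fscale :: 'a::field \<Rightarrow> (nat \<Rightarrow> 'a) \<Rightarrow> _)"
  by unfold_locales (auto simp: fscale_def algebra_simps fun_eq_iff)

interpretation fs: vector_space "fscale :: 'a::field \<Rightarrow> (nat \<Rightarrow> 'a) \<Rightarrow> _"
  by (rule vs_fscale)


lemma pvec_subspace: "fs.subspace (pvec m)"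
  by (auto simp: fs.subspace_def pvec_def fscale_def)

lemma dim_image_eq_gen:
  assumes lf: "Vector_Spaces.linear s1 s2 f"
    and fi: "inj_on f (module.span s1 S)"
  shows "vector_space.dim s2 (f ` S) = vector_space.dim s1 S"
proof -
  interpret lf: Vector_Spaces.linear s1 s2 f by fact
  obtain B where B: "B \<subseteq> S" "lf.vs1.independent B" "S \<subseteq> lf.vs1.span B" "card B = lf.vs1.dim S"
    using lf.vs1.basis_exists[of S] by auto
  then have "lf.vs1.span S = lf.vs1.span B"
    using lf.vs1.span_mono[of B S] lf.vs1.span_mono[of S "lf.vs1.span B"] lf.vs1.span_span[of B] by auto
  moreover have "card (f ` B) = card B"
    using assms card_image[of f B] inj_on_subset[of f "lf.vs1.span S" B] B lf.vs1.span_superset by auto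
  moreover have "(f ` B) \<subseteq> (f ` S)"
    using B by auto
  ultimately show ?thesis
    by (metis B(2) B(4) fi lf.dependent_inj_imageD lf.span_image lf.vs2.dim_eq_card_independent lf.vs2.dim_span)
qed

lemma finite_pvec: "finite (pvec m :: (nat \<Rightarrow> 'a::{field,finite}) set)"
  and card_pvec: "card (pvec m :: (nat \<Rightarrow> 'a::{field,finite}) set) = card (UNIV :: 'a set) ^ Suc m"
proof -
  have bij: "bij_betw (\<lambda>v. restrict v {..m}) (pvec m :: (nat \<Rightarrow> 'a) set) (PiE {..m} (\<lambda>_. UNIV))"
    unfolding bij_betw_def
  proof
    show "inj_on (\<lambda>v. restrict v {..m}) (pvec m :: (nat \<Rightarrow> 'a) set)"
      by (auto simp: inj_on_def pvec_def fun_eq_iff restrict_def) (metis not_le)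
    show "(\<lambda>v. restrict v {..m}) ` (pvec m :: (nat \<Rightarrow> 'a) set) = PiE {..m} (\<lambda>_. UNIV)"
    proof (auto simp: pvec_def split: if_splits)
      fix f :: "nat \<Rightarrow> 'a" assume f: "f \<in> PiE {..m} (\<lambda>_. UNIV)"
      show "f \<in> (\<lambda>v. restrict v {..m}) ` {v. \<forall>i>m. v i = 0}"
        apply (rule image_eqI[of _ _ "\<lambda>i. if i \<le> m then f i else 0"])
        using f by (auto simp: fun_eq_iff PiE_def extensional_def)
    qed
  qed
  have "finite (PiE {..m} (\<lambda>_. UNIV :: 'a set))" by (simp add: finite_PiE)
  then show "finite (pvec m :: (nat \<Rightarrow> 'a) set)" using bij bij_betw_finite by blast
  have "card (pvec m :: (nat \<Rightarrow> 'a) set) = card (PiE {..m} (\<lambda>_. UNIV :: 'a set))"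
    using bij bij_betw_same_card by blast
  also have "\<dots> = card (UNIV :: 'a set) ^ Suc m" by (simp add: card_PiE)
  finally show "card (pvec m :: (nat \<Rightarrow> 'a) set) = card (UNIV :: 'a set) ^ Suc m" .
qed



definition dotp :: "nat \<Rightarrow> (nat \<Rightarrow> 'a::field) \<Rightarrow> (nat \<Rightarrow> 'a) \<Rightarrow> 'a" where
  "dotp m a v = (\<Sum>t\<le>m. a t * v t)"

definition hyp :: "nat \<Rightarrow> (nat \<Rightarrow> 'a::field) \<Rightarrow> (nat \<Rightarrow> 'a) set" where
  "hyp m a = {v \<in> pvec m. dotp m a v = 0}"

lemma hyp_construct:
  fixes a :: "nat \<Rightarrow> 'a::field"
  assumes a: "a \<in> pvec (Suc n)" "a \<noteq> 0"
  shows "\<exists>T. Vector_Spaces.linear fscale fscale T \<and> inj_on T (pvec n) \<and> T ` pvec n = hyp (Suc n) a"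
proof -
  define m where "m = Suc n"
  obtain k where k: "a k \<noteq> 0" using a(2) by (auto simp: fun_eq_iff)
  have km: "k \<le> m"
  proof (rule ccontr)
    assume "\<not> k \<le> m" then have "a k = 0" using a(1) by (simp add: pvec_def m_def)
    then show False using k by simp
  qed
  define \<sigma> where "\<sigma> t = (if t = k then m else if t = m then k else t)" for t
  have ss: "\<sigma> (\<sigma> t) = t" for t by (auto simp: \<sigma>_def)
  define c where "c x = - (\<Sum>t\<in>{..m}-{k}. a t * x (\<sigma> t)) / a k" for x :: "nat \<Rightarrow> 'a"
  define T where "T x = (\<lambda>t. if t = k then c x else x (\<sigma> t))" for x :: "nat \<Rightarrow> 'a"
  have cadd: "c (x + y) = c x + c y" for x y
    unfolding c_def by (simp add: sum.distrib distrib_left add_divide_distrib diff_divide_distrib)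
  have cscale: "c (fscale r x) = r * c x" for r x
    unfolding c_def fscale_def by (simp add: sum_distrib_left algebra_simps)
  have lin: "Vector_Spaces.linear fscale fscale T"
    unfolding Vector_Spaces.linear_iff
    by (auto simp: vs_fscale T_def cadd cscale[unfolded fscale_def] fscale_def fun_eq_iff)
  have inj: "inj_on T (pvec n)"
  proof (rule inj_onI)
    fix x y assume x: "x \<in> pvec n" and y: "y \<in> pvec n" and e: "T x = T y"
    show "x = y"
    proof
      fix s
      show "x s = y s"
      proof (cases "s = m")
        case True then show ?thesis using x y by (auto simp: pvec_def m_def)
      next
        case False
        then have "\<sigma> s \<noteq> k" by (auto simp: \<sigma>_def)
        then have "T x (\<sigma> s) = x s" "T y (\<sigma> s) = y s" by (auto simp: T_def ss)
        then show ?thesis using e by simp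
      qed
    qed
  qed
  have dot_split: "dotp m a v = a k * v k + (\<Sum>t\<in>{..m}-{k}. a t * v t)" for v
    unfolding dotp_def using km by (simp add: sum.remove)
  have img: "T ` pvec n = hyp m a"
  proof
    show "T ` pvec n \<subseteq> hyp m a"
    proof
      fix y assume "y \<in> T ` pvec n"
      then obtain x where x: "x \<in> pvec n" and y: "y = T x" by auto
      have "y \<in> pvec m"
        using x km unfolding pvec_def y T_def \<sigma>_def m_def by auto
      moreover have "(\<Sum>t\<in>{..m}-{k}. a t * y t) = (\<Sum>t\<in>{..m}-{k}. a t * x (\<sigma> t))"
        by (rule sum.cong) (auto simp: y T_def)
      then have "dotp m a y = 0"
        unfolding dot_split using k by (simp add: y T_def c_def)
      ultimately show "y \<in> hyp m a" by (simp add: hyp_def)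
    qed
    show "hyp m a \<subseteq> T ` pvec n"
    proof
      fix y assume y: "y \<in> hyp m a"
      define x where "x s = (if s = m then 0 else y (\<sigma> s))" for s
      have xp: "x \<in> pvec n"
        using y km unfolding pvec_def x_def hyp_def \<sigma>_def m_def by auto
      have "T x = y"
      proof
        fix t
        show "T x t = y t"
        proof (cases "t = k")
          case False
          then have "\<sigma> t \<noteq> m" by (auto simp: \<sigma>_def)
          then show ?thesis using False by (simp add: T_def x_def ss)
        next
          case True
          have "(\<Sum>t\<in>{..m}-{k}. a t * x (\<sigma> t)) = (\<Sum>t\<in>{..m}-{k}. a t * y t)"
            apply (rule sum.cong, simp)
            subgoal for t by (subgoal_tac "\<sigma> t \<noteq> m") (auto simp: x_def ss \<sigma>_def)
            done
          moreover have "dotp m a y = 0" using y by (simp add: hyp_def)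
          ultimately show ?thesis using True k unfolding dot_split T_def c_def
            by (simp add: field_simps add_eq_0_iff)
        qed
      qed
      then show "y \<in> T ` pvec n" using xp by auto
    qed
  qed
  show ?thesis using lin inj img unfolding m_def by blast
qed



lemma finite_psubs: "finite (psubs m k :: (nat \<Rightarrow> 'a::{field,finite}) set set)"
proof -
  have "psubs m k \<subseteq> Pow (pvec m :: (nat \<Rightarrow> 'a) set)" by (auto simp: psubs_def)
  then show ?thesis using finite_pvec by (meson finite_Pow_iff finite_subset)
qed

lemma cover_exists:
  assumes P: "P \<in> psubs m 3"
  shows "\<exists>l\<in>psubs m 2. l \<subseteq> (P :: (nat \<Rightarrow> 'a::field) set)"
proof -
  have Pp: "P \<subseteq> pvec m" "fs.subspace P" "fs.dim P = 3" using P by (auto simp: psubs_def)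
  obtain B where B: "B \<subseteq> P" "fs.independent B" "P \<subseteq> fs.span B" "card B = fs.dim P"
    using fs.basis_exists by blast
  have cB: "card B = 3" using B Pp by simp
  then have fB: "finite B" using card.infinite by fastforce
  from cB obtain b where b: "b \<in> B" by fastforce
  define l where "l = fs.span (B - {b})"
  have ind: "fs.independent (B - {b})" using B(2) fs.independent_mono by blast
  have c2: "card (B - {b}) = 2" using cB b fB by simp
  have "fs.dim l = 2" unfolding l_def using fs.dim_span_eq_card_independent[OF ind] c2 by simp
  moreover have "l \<subseteq> P" unfolding l_def using B(1) Pp(2) by (meson Diff_subset fs.span_minimal subset_trans)
  moreover have "fs.subspace l" unfolding l_def by (rule fs.subspace_span)
  ultimately have "l \<in> psubs m 2" "l \<subseteq> P" using Pp(1) by (auto simp: psubs_def)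
  then show ?thesis by blast
qed

lemma transport:
  fixes T :: "(nat \<Rightarrow> 'a::{field,finite}) \<Rightarrow> (nat \<Rightarrow> 'a)"
  assumes lin: "Vector_Spaces.linear fscale fscale T" and inj: "inj_on T (pvec n)"
    and img: "T ` pvec n = Hs" and Hs: "Hs \<subseteq> pvec (Suc n)"
    and L: "L \<subseteq> psubs (Suc n) 2" and cov: "\<forall>P\<in>psubs (Suc n) 3. \<exists>l\<in>L. l \<subseteq> P"
  shows "fcov TYPE('a) n \<le> card {l\<in>L. l \<subseteq> Hs}"
proof -
  interpret lf: Vector_Spaces.linear fscale fscale T by (rule lin)
  define Lh where "Lh = {l\<in>L. l \<subseteq> Hs}"
  define pre where "pre l = T -` l \<inter> pvec n" for l
  have Tpre: "T ` pre l = l" if "l \<subseteq> Hs" for l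
    using img that by (auto simp: pre_def)
  have injs: "inj_on T (fs.span X)" if "X \<subseteq> pvec n" for X
    using inj fs.span_minimal[OF that pvec_subspace] inj_on_subset by blast
  have dimT: "fs.dim (T ` X) = fs.dim X" if "X \<subseteq> pvec n" for X
    using dim_image_eq_gen[OF lin injs[OF that]] .
  have preL: "pre ` Lh \<subseteq> psubs n 2"
  proof
    fix x assume "x \<in> pre ` Lh"
    then obtain l where l: "l \<in> Lh" and x: "x = pre l" by auto
    have lp: "fs.subspace l" "fs.dim l = 2" "l \<subseteq> Hs" using l L by (auto simp: Lh_def psubs_def)
    have sub: "pre l \<subseteq> pvec n" by (auto simp: pre_def)
    have "fs.subspace (pre l)" unfolding pre_def
      by (rule fs.subspace_inter[OF lf.subspace_vimage[OF lp(1)] pvec_subspace])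
    moreover have "fs.dim (pre l) = 2" using dimT[OF sub] Tpre[OF lp(3)] lp(2) by simp
    ultimately show "x \<in> psubs n 2" using sub x by (auto simp: psubs_def)
  qed
  have injpre: "inj_on pre Lh"
    by (rule inj_onI) (metis (no_types, lifting) Lh_def Tpre mem_Collect_eq)
  have covpre: "\<forall>P\<in>psubs n 3. \<exists>l\<in>pre ` Lh. l \<subseteq> P"
  proof
    fix P assume P: "P \<in> (psubs n 3 :: (nat \<Rightarrow> 'a) set set)"
    have Pp: "P \<subseteq> pvec n" "fs.subspace P" "fs.dim P = 3" using P by (auto simp: psubs_def)
    have "T ` P \<in> psubs (Suc n) 3"
      using lf.subspace_image[OF Pp(2)] dimT[OF Pp(1)] Pp img Hs by (auto simp: psubs_def)
    then obtain l where l: "l \<in> L" "l \<subseteq> T ` P" using cov by blast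
    have "l \<subseteq> Hs" using l(2) Pp(1) img by auto
    then have lh: "l \<in> Lh" using l by (auto simp: Lh_def)
    have "pre l \<subseteq> P"
    proof
      fix x assume "x \<in> pre l"
      then have x: "x \<in> pvec n" "T x \<in> l" by (auto simp: pre_def)
      then obtain p where p: "p \<in> P" "T x = T p" using l(2) by auto
      then have "x = p" using inj x(1) Pp(1) by (meson inj_onD subsetD)
      then show "x \<in> P" using p by simp
    qed
    then show "\<exists>l\<in>pre ` Lh. l \<subseteq> P" using lh by blast
  qed
  have "fcov TYPE('a) n \<le> card (pre ` Lh)"
    unfolding fcov_def
    by (rule Least_le) (use preL covpre in blast)
  also have "\<dots> = card Lh" using card_image[OF injpre] .
  finally show ?thesis unfolding Lh_def .
qed



lemma annih_bound:
  fixes l :: "(nat \<Rightarrow> 'a::{field,finite}) set"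
  assumes l: "l \<in> psubs m 2"
  shows "card {a\<in>pvec m. l \<subseteq> hyp m a} \<le> card (UNIV::'a set) ^ (m - 1)"
proof -
  have lp: "l \<subseteq> pvec m" "fs.subspace l" "fs.dim l = 2" using l by (auto simp: psubs_def)
  obtain B where B: "B \<subseteq> l" "fs.independent B" "l \<subseteq> fs.span B" "card B = fs.dim l"
    using fs.basis_exists by blast
  then obtain u v where uv: "B = {u, v}" "u \<noteq> v" using lp(3) by (metis card_2_iff)
  have up: "u \<in> l" "v \<in> l" using B(1) uv by auto
  have "\<exists>i j. u i * v j - u j * v i \<noteq> 0"
  proof (rule ccontr)
    assume "\<not> ?thesis"
    then have minor: "u i * v j = u j * v i" for i j by auto
    have "u \<noteq> 0" using B(2) uv fs.dependent_zero by blast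
    then obtain i where i: "u i \<noteq> 0" by (auto simp: fun_eq_iff)
    have "v = fscale (v i / u i) u"
      unfolding fscale_def fun_eq_iff using i minor
      by (metis mult.commute nonzero_mult_div_cancel_left times_divide_eq_left)
    then have "v \<in> fs.span {u}" by (metis fs.span_base fs.span_scale singletonI)
    moreover have "{u, v} - {v} = {u}" using uv(2) by auto
    ultimately have "fs.dependent {u, v}" unfolding fs.dependent_def by force
    then show False using B(2) uv(1) by simp
  qed
  then obtain i j where det: "u i * v j - u j * v i \<noteq> 0" by blast
  have upv: "u \<in> pvec m" "v \<in> pvec m" using up lp(1) by auto
  have im: "i \<le> m"
  proof (rule ccontr)
    assume "\<not> i \<le> m" then have "u i = 0" "v i = 0" using upv by (auto simp: pvec_def)
    then show False using det by simp
  qed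
  have jm: "j \<le> m"
  proof (rule ccontr)
    assume "\<not> j \<le> m" then have "u j = 0" "v j = 0" using upv by (auto simp: pvec_def)
    then show False using det by simp
  qed
  have ij: "i \<noteq> j" using det by auto
  define D where "D = {..m} - {i, j}"
  have cD: "card D = m - 1"
  proof -
    have "card D = card {..m} - card {i, j}" unfolding D_def
      using im jm by (intro card_Diff_subset) auto
    then show ?thesis using ij by simp
  qed
  define S where "S = {a\<in>pvec m. l \<subseteq> hyp m a}"
  have key: "d i * w i + d j * w j = dotp m a w - dotp m b w"
    if "d = a - b" "a \<in> pvec m" "b \<in> pvec m" "\<forall>t\<in>D. a t = b t" for a b d and w :: "nat \<Rightarrow> 'a"
  proof -
    have "dotp m a w - dotp m b w = (\<Sum>t\<le>m. d t * w t)"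
      unfolding dotp_def that(1) by (simp add: sum_subtractf[symmetric] algebra_simps)
    also have "\<dots> = (\<Sum>t\<in>{i,j}. d t * w t)"
      using im jm that(1,4) by (intro sum.mono_neutral_right) (auto simp: D_def)
    also have "\<dots> = d i * w i + d j * w j" using ij by simp
    finally show ?thesis by simp
  qed
  have inj: "inj_on (\<lambda>a. restrict a D) S"
  proof (rule inj_onI)
    fix a b assume a: "a \<in> S" and b: "b \<in> S" and e: "restrict a D = restrict b D"
    have eD: "\<forall>t\<in>D. a t = b t" using e by (metis restrict_apply')
    have ap: "a \<in> pvec m" "b \<in> pvec m" using a b by (auto simp: S_def)
    have z: "dotp m a u = 0" "dotp m a v = 0" "dotp m b u = 0" "dotp m b v = 0"
      using a b up by (auto simp: S_def hyp_def)
    define d where "d = a - b"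
    have e1: "d i * u i + d j * u j = 0" using key[OF d_def ap eD, of u] z by simp
    have e2: "d i * v i + d j * v j = 0" using key[OF d_def ap eD, of v] z by simp
    have "d i * (u i * v j - u j * v i) = v j * (d i * u i + d j * u j) - u j * (d i * v i + d j * v j)"
      by (simp add: algebra_simps)
    then have di: "d i = 0" using e1 e2 det by simp
    have "d j * (u i * v j - u j * v i) = u i * (d i * v i + d j * v j) - v i * (d i * u i + d j * u j)"
      by (simp add: algebra_simps)
    then have dj: "d j = 0" using e1 e2 det by simp
    show "a = b"
    proof
      fix t
      show "a t = b t"
      proof (cases "t \<le> m")
        case True
        then show ?thesis using eD di dj unfolding D_def d_def by (cases "t = i \<or> t = j") auto
      next
        case False then show ?thesis using ap by (auto simp: pvec_def)
      qed
    qed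
  qed
  have "card S = card ((\<lambda>a. restrict a D) ` S)" using card_image[OF inj] by simp
  also have "\<dots> \<le> card (PiE D (\<lambda>_. UNIV :: 'a set))"
    by (rule card_mono) (auto simp: finite_PiE D_def split: if_splits)
  also have "\<dots> = card (UNIV::'a set) ^ (m - 1)" using card_PiE[of D "\<lambda>_. UNIV :: 'a set"] by (simp add: D_def cD[unfolded D_def])
  finally show ?thesis unfolding S_def .
qed



lemma card_filter_sum: "finite A \<Longrightarrow> card {x\<in>A. P x} = (\<Sum>x\<in>A. if P x then 1 else (0::nat))"
  by (subst sum.inter_filter[symmetric]) simp_all

lemma rho_arith:
  fixes Q F0 F1 :: real and n :: nat
  assumes Q: "Q \<ge> 2" and n: "n \<ge> 1"
    and ineq: "(Q ^ (n+2) - 1) * F0 \<le> F1 * (Q ^ n - 1)"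
  shows "F0 / (((Q ^ (n+1) - 1) * (Q ^ n - 1)) / ((Q ^ 2 - 1) * (Q - 1)))
       \<le> F1 / (((Q ^ (Suc n+1) - 1) * (Q ^ Suc n - 1)) / ((Q ^ 2 - 1) * (Q - 1)))"
proof -
  define c where "c = (Q ^ 2 - 1) * (Q - 1)"
  define X0 where "X0 = Q ^ n - 1"
  define X1 where "X1 = Q ^ (n+1) - 1"
  define X2 where "X2 = Q ^ (n+2) - 1"
  have pw: "Q ^ k > 1" if "k \<ge> 1" for k :: nat
    using Q that by (intro one_less_power) auto
  have c: "c > 0" unfolding c_def using pw[of 2] Q by simp
  have x0: "X0 > 0" unfolding X0_def using pw[of n] n by simp
  have x1: "X1 > 0" unfolding X1_def using pw[of "n+1"] by simp
  have x2: "X2 > 0" unfolding X2_def using pw[of "n+2"] by simp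
  have g0: "((Q ^ (n+1) - 1) * (Q ^ n - 1)) / ((Q ^ 2 - 1) * (Q - 1)) = X1 * X0 / c"
    by (simp add: X0_def X1_def c_def)
  have g1: "((Q ^ (Suc n+1) - 1) * (Q ^ Suc n - 1)) / ((Q ^ 2 - 1) * (Q - 1)) = X2 * X1 / c"
    by (simp add: X2_def X1_def c_def)
  have e0: "F0 / (X1 * X0 / c) = (F0 * X2) * (c / (X0 * X1 * X2))"
    using x0 x1 x2 c by (simp add: field_simps)
  have e1: "F1 / (X2 * X1 / c) = (F1 * X0) * (c / (X0 * X1 * X2))"
    using x0 x1 x2 c by (simp add: field_simps)
  have cpos: "c / (X0 * X1 * X2) > 0" using x0 x1 x2 c by (intro divide_pos_pos mult_pos_pos)
  have i2: "X2 * F0 \<le> F1 * X0" using ineq unfolding X0_def X2_def .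
  have "F0 * X2 \<le> F1 * X0" using i2 by (simp only: mult.commute)
  then have "(F0 * X2) * (c / (X0 * X1 * X2)) \<le> (F1 * X0) * (c / (X0 * X1 * X2))"
    using cpos by (rule mult_right_mono[OF _ less_imp_le])
  then show ?thesis unfolding g0 g1 e0 e1 .
qed

theorem lemma4p6:
  fixes n :: nat
  assumes "n \<ge> 1"
  shows "rho TYPE('a::{field,finite}) n \<le> rho TYPE('a) (Suc n)"
proof -
  define q where "q = card (UNIV :: 'a set)"
  define m where "m = Suc n"
  have q2: "q \<ge> 2"
  proof -
    have "card {0::'a, 1} \<le> q" unfolding q_def by (rule card_mono) auto
    then show ?thesis by simp
  qed
  define Pc where "Pc k = (\<exists>L \<subseteq> (psubs m 2 :: (nat \<Rightarrow> 'a) set set).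
       card L = k \<and> (\<forall>P \<in> (psubs m 3 :: (nat \<Rightarrow> 'a) set set). \<exists>l\<in>L. l \<subseteq> P))" for k
  have "Pc (card (psubs m 2 :: (nat \<Rightarrow> 'a) set set))"
    unfolding Pc_def using cover_exists by blast
  then have "Pc (LEAST k. Pc k)" by (rule LeastI)
  moreover have "fcov TYPE('a) m = (LEAST k. Pc k)" unfolding fcov_def Pc_def by (rule refl)
  ultimately obtain L where L: "L \<subseteq> (psubs m 2 :: (nat \<Rightarrow> 'a) set set)" "card L = fcov TYPE('a) m"
      "\<forall>P \<in> (psubs m 3 :: (nat \<Rightarrow> 'a) set set). \<exists>l\<in>L. l \<subseteq> P"
    unfolding Pc_def by auto
  have fL: "finite L" by (rule finite_subset[OF L(1) finite_psubs])
  define A0 where "A0 = (pvec m :: (nat \<Rightarrow> 'a) set) - {0}"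
  have fA0: "finite A0" unfolding A0_def using finite_pvec by simp
  have z: "(0 :: nat \<Rightarrow> 'a) \<in> pvec m" by (simp add: pvec_def)
  have cA0: "card A0 = q ^ Suc m - 1"
  proof -
    have "card (pvec m :: (nat \<Rightarrow> 'a) set) = q ^ Suc m" unfolding q_def by (rule card_pvec)
    moreover have "finite (pvec m :: (nat \<Rightarrow> 'a) set)" by (rule finite_pvec)
    ultimately show ?thesis unfolding A0_def using z by simp
  qed
  have lower: "fcov TYPE('a) n \<le> card {l\<in>L. l \<subseteq> hyp m a}" if a: "a \<in> A0" for a
  proof -
    from a have "a \<in> pvec (Suc n)" "a \<noteq> 0" by (auto simp: A0_def m_def)
    from hyp_construct[OF this] obtain T where T: "Vector_Spaces.linear fscale fscale T"
      "inj_on T (pvec n)" "T ` pvec n = hyp (Suc n) a" by blast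
    show ?thesis unfolding m_def
      by (rule transport[OF T]) (use L in \<open>auto simp: hyp_def m_def\<close>)
  qed
  have upper: "card {a\<in>A0. l \<subseteq> hyp m a} \<le> q ^ n - 1" if l: "l \<in> L" for l
  proof -
    have lp: "l \<in> psubs m 2" using l L(1) by auto
    have "{a\<in>A0. l \<subseteq> hyp m a} = {a\<in>pvec m. l \<subseteq> hyp m a} - {0}" by (auto simp: A0_def)
    moreover have "0 \<in> {a\<in>pvec m. l \<subseteq> hyp m a}"
      using lp z by (auto simp: psubs_def hyp_def dotp_def)
    moreover have "finite {a\<in>pvec m. l \<subseteq> hyp m a}"
      using finite_pvec[of m, where 'a='a] by simp
    ultimately have "card {a\<in>A0. l \<subseteq> hyp m a} = card {a\<in>pvec m. l \<subseteq> hyp m a} - 1" by simp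
    then show ?thesis using annih_bound[OF lp] by (simp add: q_def m_def)
  qed
  have "card A0 * fcov TYPE('a) n = (\<Sum>a\<in>A0. fcov TYPE('a) n)" by simp
  also have "\<dots> \<le> (\<Sum>a\<in>A0. card {l\<in>L. l \<subseteq> hyp m a})" by (rule sum_mono) (rule lower)
  also have "\<dots> = (\<Sum>a\<in>A0. \<Sum>l\<in>L. if l \<subseteq> hyp m a then 1 else 0)"
    using fL by (simp add: card_filter_sum)
  also have "\<dots> = (\<Sum>l\<in>L. \<Sum>a\<in>A0. if l \<subseteq> hyp m a then 1 else 0)" by (rule sum.swap)
  also have "\<dots> = (\<Sum>l\<in>L. card {a\<in>A0. l \<subseteq> hyp m a})"
    using fA0 by (simp add: card_filter_sum)
  also have "\<dots> \<le> (\<Sum>l\<in>L. q ^ n - 1)" by (rule sum_mono) (rule upper)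
  also have "\<dots> = fcov TYPE('a) m * (q ^ n - 1)" using L(2) by simp
  finally have nat_ineq: "(q ^ Suc m - 1) * fcov TYPE('a) n \<le> fcov TYPE('a) m * (q ^ n - 1)"
    using cA0 by simp
  have q1: "1 \<le> q ^ k" for k using q2 by simp
  have "real ((q ^ Suc m - 1) * fcov TYPE('a) n) \<le> real (fcov TYPE('a) m * (q ^ n - 1))"
    using nat_ineq by linarith
  moreover have "real (q ^ Suc m - 1) = real q ^ (n+2) - 1"
    by (subst of_nat_diff[OF q1]) (simp add: m_def)
  moreover have "real (q ^ n - 1) = real q ^ n - 1"
    by (subst of_nat_diff[OF q1]) simp
  ultimately have rineq: "(real q ^ (n+2) - 1) * real (fcov TYPE('a) n) \<le> real (fcov TYPE('a) m) * (real q ^ n - 1)"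
    by (simp only: of_nat_mult)
  have Q: "real q \<ge> 2" using q2 by simp
  show ?thesis
    unfolding rho_def gauss2_def q_def[symmetric]
    using rho_arith[OF Q assms rineq] by (simp add: m_def)
qed


end
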